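(* Let $L, M$ be complete lattices and $f:L\to M$ a complete lattice homomorphism (preserving arbitrary joins and meets). If a set filter $\mathcal{F}$ on $L$ star-converges to $x\in L$, then $f(\mathcal{F})$ star-converges to $f(x)$ in $M$.
   Context: A set filter on a set $P$ is a nonempty collection of subsets of $P$ not containing $\emptyset$, closed under finite intersections and under supersets; if $\mathcal{F}\subseteq\mathcal{G}$ are set filters, $\mathcal{G}$ is a super-filter of $\mathcal{F}$. For a subset $S$ of a poset, $S^u$ and $S^\ell$ denote the sets of upper and lower bounds of $S$. For a set filter $\mathcal{F}$ on a complete lattice $P$, put $\mathcal{F}^u=\bigcup\{F^u: F\in\mathcal{F}\}$, $\mathcal{F}^\ell=\bigcup\{F^\ell: F\in\mathcal{F}\}$; $\mathcal{F}$ order-converges to $x$, written $\mathcal{F}\to x$, if $\bigwedge\mathcal{F}^u=x=\bigvee\mathcal{F}^\ell$. $\mathcal{F}$ star-converges to $x$ if for every super-filter $\mathcal{F}'$ of $\mathcal{F}$ there is a super-filter $\mathcal{G}$ of $\mathcal{F}'$ with $\mathcal{G}\to x$. For a map $f:X\to Y$ and a set filter $\mathcal{F}$ on $X$, $f(\mathcal{F})$ is the set filter on $Y$ of all subsets of $Y$ containing $f(F)$ for some $F\in\mathcal{F}$. *)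

theory Defs
  imports Main
begin

definition set_filter :: "'a set set \<Rightarrow> bool" where
  "set_filter \<F> \<longleftrightarrow> \<F> \<noteq> {} \<and> {} \<notin> \<F>
     \<and> (\<forall>A\<in>\<F>. \<forall>B\<in>\<F>. A \<inter> B \<in> \<F>)
     \<and> (\<forall>A\<in>\<F>. \<forall>B. A \<subseteq> B \<longrightarrow> B \<in> \<F>)"

definition upper_bounds :: "'a::order set \<Rightarrow> 'a set" where
  "upper_bounds S = {y. \<forall>s\<in>S. s \<le> y}"

definition lower_bounds :: "'a::order set \<Rightarrow> 'a set" where
  "lower_bounds S = {y. \<forall>s\<in>S. y \<le> s}"

definition filter_ub :: "'a::order set set \<Rightarrow> 'a set" where
  "filter_ub \<F> = (\<Union>F\<in>\<F>. upper_bounds F)"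

definition filter_lb :: "'a::order set set \<Rightarrow> 'a set" where
  "filter_lb \<F> = (\<Union>F\<in>\<F>. lower_bounds F)"

definition order_conv :: "'a::complete_lattice set set \<Rightarrow> 'a \<Rightarrow> bool" where
  "order_conv \<F> x \<longleftrightarrow> Inf (filter_ub \<F>) = x \<and> Sup (filter_lb \<F>) = x"

definition star_conv :: "'a::complete_lattice set set \<Rightarrow> 'a \<Rightarrow> bool" where
  "star_conv \<F> x \<longleftrightarrow> (\<forall>\<F>'. set_filter \<F>' \<and> \<F> \<subseteq> \<F>' \<longrightarrow>
      (\<exists>\<G>. set_filter \<G> \<and> \<F>' \<subseteq> \<G> \<and> order_conv \<G> x))"

definition image_filter :: "('a \<Rightarrow> 'b) \<Rightarrow> 'a set set \<Rightarrow> 'b set set" where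
  "image_filter f \<F> = {B. \<exists>A\<in>\<F>. f ` A \<subseteq> B}"

definition complete_lattice_hom :: "('a::complete_lattice \<Rightarrow> 'b::complete_lattice) \<Rightarrow> bool" where
  "complete_lattice_hom f \<longleftrightarrow> (\<forall>S. f (Sup S) = Sup (f ` S)) \<and> (\<forall>S. f (Inf S) = Inf (f ` S))"

end

theory Submission
  imports Defs
begin

lemma inf_ub_img: fixes f :: "'a \<Rightarrow> 'b::complete_lattice" shows "Inf (filter_ub (image_filter f G)) = (INF A\<in>G. Sup (f`A))"
proof (rule antisym)
  show "Inf (filter_ub (image_filter f G)) \<le> (INF A\<in>G. Sup (f`A))"
  proof (rule INF_greatest)
    fix A assume "A \<in> G"
    hence "Sup (f`A) \<in> filter_ub (image_filter f G)"
      unfolding filter_ub_def image_filter_def upper_bounds_def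
      by (auto intro!: Sup_upper)
    thus "Inf (filter_ub (image_filter f G)) \<le> Sup (f`A)" by (rule Inf_lower)
  qed
  show "(INF A\<in>G. Sup (f`A)) \<le> Inf (filter_ub (image_filter f G))"
  proof (rule Inf_greatest)
    fix y assume "y \<in> filter_ub (image_filter f G)"
    then obtain A B where "A \<in> G" "f`A \<subseteq> B" "\<forall>s\<in>B. s \<le> y"
      unfolding filter_ub_def image_filter_def upper_bounds_def by auto
    hence "Sup (f`A) \<le> y" by (auto intro!: Sup_least)
    thus "(INF A\<in>G. Sup (f`A)) \<le> y" using \<open>A\<in>G\<close> by (meson INF_lower order_trans)
  qed
qed

lemma sup_lb_img: fixes f :: "'a \<Rightarrow> 'b::complete_lattice" shows "Sup (filter_lb (image_filter f G)) = (SUP A\<in>G. Inf (f`A))"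
proof (rule antisym)
  show "(SUP A\<in>G. Inf (f`A)) \<le> Sup (filter_lb (image_filter f G))"
  proof (rule SUP_least)
    fix A assume "A \<in> G"
    hence "Inf (f`A) \<in> filter_lb (image_filter f G)"
      unfolding filter_lb_def image_filter_def lower_bounds_def
      by (auto intro!: Inf_lower)
    thus "Inf (f`A) \<le> Sup (filter_lb (image_filter f G))" by (rule Sup_upper)
  qed
  show "Sup (filter_lb (image_filter f G)) \<le> (SUP A\<in>G. Inf (f`A))"
  proof (rule Sup_least)
    fix y assume "y \<in> filter_lb (image_filter f G)"
    then obtain A B where "A \<in> G" "f`A \<subseteq> B" "\<forall>s\<in>B. y \<le> s"
      unfolding filter_lb_def image_filter_def lower_bounds_def by auto
    hence "y \<le> Inf (f`A)" by (auto intro!: Inf_greatest)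
    thus "y \<le> (SUP A\<in>G. Inf (f`A))" using \<open>A\<in>G\<close> by (meson SUP_upper order_trans)
  qed
qed

lemma image_filter_id: "set_filter G \<Longrightarrow> image_filter id G = G"
  unfolding image_filter_def set_filter_def by auto

theorem mainTheorem4:
  fixes f :: "'a::complete_lattice \<Rightarrow> 'b::complete_lattice"
    and \<F> :: "'a set set" and x :: 'a
  assumes "complete_lattice_hom f"
    and "set_filter \<F>"
    and "star_conv \<F> x"
  shows "star_conv (image_filter f \<F>) (f x)"
  unfolding star_conv_def
proof (intro allI impI, elim conjE)
  fix F' assume F': "set_filter F'" "image_filter f \<F> \<subseteq> F'"
  define H where "H = {A. \<exists>F\<in>\<F>. \<exists>B\<in>F'. F \<inter> f -` B \<subseteq> A}"
  have ne: "F \<inter> f -` B \<noteq> {}" if "F \<in> \<F>" "B \<in> F'" for F B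
  proof
    assume e: "F \<inter> f -` B = {}"
    have "f`F \<in> F'" using F'(2) that(1) unfolding image_filter_def by auto
    hence "f`F \<inter> B \<in> F'" using F'(1) that(2) unfolding set_filter_def by blast
    moreover have "f`F \<inter> B = {}" using e by auto
    ultimately show False using F'(1) unfolding set_filter_def by auto
  qed
  have UF: "UNIV \<in> \<F>" using assms(2) unfolding set_filter_def by blast
  have UF': "UNIV \<in> F'" using F'(1) unfolding set_filter_def by blast
  have Hf: "set_filter H"
    unfolding set_filter_def
  proof (intro conjI ballI allI impI)
    show "H \<noteq> {}" using UF UF' unfolding H_def by blast
    show "{} \<notin> H" using ne unfolding H_def by blast
  next
    fix A B assume "A \<in> H" "B \<in> H"
    then obtain F1 B1 F2 B2 where "F1\<in>\<F>" "B1\<in>F'" "F1 \<inter> f -` B1 \<subseteq> A"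
      "F2\<in>\<F>" "B2\<in>F'" "F2 \<inter> f -` B2 \<subseteq> B" unfolding H_def by blast
    note o = this
    have i1: "F1 \<inter> F2 \<in> \<F>" using assms(2) o(1,4)
      unfolding set_filter_def by blast
    have i2: "B1 \<inter> B2 \<in> F'" using F'(1) o(2,5)
      unfolding set_filter_def by blast
    have i3: "(F1 \<inter> F2) \<inter> f -` (B1 \<inter> B2) \<subseteq> A \<inter> B"
      using o(3,6) by auto
    show "A \<inter> B \<in> H" unfolding H_def mem_Collect_eq by (intro bexI[where x="F1 \<inter> F2"] bexI[where x="B1 \<inter> B2"] i1 i2 i3)
  next
    fix A B assume "A \<in> H" "A \<subseteq> B"
    from \<open>A \<in> H\<close> obtain F C where c: "F\<in>\<F>" "C\<in>F'" "F \<inter> f -` C \<subseteq> A"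
      unfolding H_def by blast
    have "F \<inter> f -` C \<subseteq> B" using c(3) \<open>A \<subseteq> B\<close> by (rule order_trans)
    thus "B \<in> H" unfolding H_def mem_Collect_eq by (intro bexI[OF _ c(1)] bexI[OF _ c(2)])
  qed
  have FH: "\<F> \<subseteq> H" using UF' unfolding H_def by blast
  obtain G where G: "set_filter G" "H \<subseteq> G" "order_conv G x"
    using assms(3) Hf FH unfolding star_conv_def by blast
  have x1: "(INF A\<in>G. Sup A) = x" using G(3) inf_ub_img[of id G]
    unfolding order_conv_def image_filter_id[OF G(1)] by simp
  have x2: "(SUP A\<in>G. Inf A) = x" using G(3) sup_lb_img[of id G]
    unfolding order_conv_def image_filter_id[OF G(1)] by simp
  have hs: "\<And>S. f (Sup S) = Sup (f ` S)" and hi: "\<And>S. f (Inf S) = Inf (f ` S)"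
    using assms(1) unfolding complete_lattice_hom_def by auto
  show "\<exists>G'. set_filter G' \<and> F' \<subseteq> G' \<and> order_conv G' (f x)"
  proof (intro exI conjI)
    show "set_filter (image_filter f G)"
      unfolding set_filter_def image_filter_def
    proof (intro conjI ballI allI impI)
      show "{B. \<exists>A\<in>G. f ` A \<subseteq> B} \<noteq> {}" using G(1) unfolding set_filter_def by blast
      show "{} \<notin> {B. \<exists>A\<in>G. f ` A \<subseteq> B}"
      proof
        assume "{} \<in> {B. \<exists>A\<in>G. f ` A \<subseteq> B}"
        then obtain A where "A \<in> G" "f ` A \<subseteq> {}" by blast
        hence "{} \<in> G" by simp
        thus False using G(1) unfolding set_filter_def by simp
      qed
    next
      fix A B assume "A \<in> {B. \<exists>A\<in>G. f ` A \<subseteq> B}" "B \<in> {B. \<exists>A\<in>G. f ` A \<subseteq> B}"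
      then obtain A1 A2 where "A1\<in>G" "A2\<in>G" "f`A1 \<subseteq> A" "f`A2 \<subseteq> B" by blast
      moreover have "A1 \<inter> A2 \<in> G" using G(1) \<open>A1\<in>G\<close> \<open>A2\<in>G\<close> unfolding set_filter_def by blast
      moreover have "f ` (A1 \<inter> A2) \<subseteq> A \<inter> B" using calculation(3,4) by auto
      ultimately show "A \<inter> B \<in> {B. \<exists>A\<in>G. f ` A \<subseteq> B}"
        unfolding mem_Collect_eq by - (rule bexI[where x="A1 \<inter> A2"], assumption+)
    next
      fix A B assume "A \<in> {B. \<exists>A\<in>G. f ` A \<subseteq> B}" "A \<subseteq> B"
      then obtain A0 where "A0 \<in> G" "f ` A0 \<subseteq> A" by blast
      have "f ` A0 \<subseteq> B" using \<open>f ` A0 \<subseteq> A\<close> \<open>A \<subseteq> B\<close> by (rule order_trans)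
      thus "B \<in> {B. \<exists>A\<in>G. f ` A \<subseteq> B}" using \<open>A0 \<in> G\<close> by blast
    qed
    show "F' \<subseteq> image_filter f G"
    proof
      fix B assume "B \<in> F'"
      hence "f -` B \<in> H" using UF unfolding H_def by blast
      hence "f -` B \<in> G" using G(2) by blast
      thus "B \<in> image_filter f G" unfolding image_filter_def by blast
    qed
    have "Inf (filter_ub (image_filter f G)) = f x"
    proof -
      have "Inf (filter_ub (image_filter f G)) = (INF A\<in>G. f (Sup A))"
        unfolding inf_ub_img hs ..
      also have "\<dots> = f (INF A\<in>G. Sup A)" by (simp add: hi image_image)
      finally show ?thesis using x1 by simp
    qed
    moreover have "Sup (filter_lb (image_filter f G)) = f x"
    proof -
      have "Sup (filter_lb (image_filter f G)) = (SUP A\<in>G. f (Inf A))"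
        unfolding sup_lb_img hi ..
      also have "\<dots> = f (SUP A\<in>G. Inf A)" by (simp add: hs image_image)
      finally show ?thesis using x2 by simp
    qed
    ultimately show "order_conv (image_filter f G) (f x)" unfolding order_conv_def by simp
  qed
qed

end
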